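(* Let $G$ be a graph of order $n$ with no isolated vertex. Then $G$ is $3$-$\gamma_{\rm tg}$-critical if and only if all of the following hold: (a) $G$ is open twin-free; (b) $G$ has no dominating vertex; (c) for every vertex $v$ of $G$ of degree at most $n-3$, there exists a vertex $u$ of degree $n-2$ that is not adjacent to $v$.
   Context: Open twin-free: no two distinct vertices have the same open neighborhood. A dominating vertex is adjacent to all other vertices. Total domination game: Dominator and Staller alternately choose vertices, each chosen vertex must be adjacent to some vertex not yet totally dominated; the game ends when no legal move exists; Dominator minimizes, Staller maximizes the number of moves; $\gamma_{\rm tg}(G)$ is the number of moves in the Dominator-start game under optimal play. $G|v$ is $G$ with $v$ declared already totally dominated, with $\gamma_{\rm tg}(G|v)$ defined analogously. $G$ is $3$-$\gamma_{\rm tg}$-critical if $\gamma_{\rm tg}(G)=3$ and $\gamma_{\rm tg}(G|v)<3$ for every vertex $v$. *)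

theory Defs
  imports Main
begin

text \<open>Simple graph: finite vertex set V, symmetric irreflexive adjacency E (only its
restriction to V matters).\<close>

definition simple_graph :: "'a set \<Rightarrow> ('a \<Rightarrow> 'a \<Rightarrow> bool) \<Rightarrow> bool" where
  "simple_graph V E \<longleftrightarrow> finite V \<and> V \<noteq> {} \<and> (\<forall>u v. E u v \<longrightarrow> E v u) \<and> (\<forall>v. \<not> E v v)"

definition nbhd :: "'a set \<Rightarrow> ('a \<Rightarrow> 'a \<Rightarrow> bool) \<Rightarrow> 'a \<Rightarrow> 'a set" where
  "nbhd V E v = {u \<in> V. E v u}"

definition deg :: "'a set \<Rightarrow> ('a \<Rightarrow> 'a \<Rightarrow> bool) \<Rightarrow> 'a \<Rightarrow> nat" where
  "deg V E v = card (nbhd V E v)"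

definition no_isolated :: "'a set \<Rightarrow> ('a \<Rightarrow> 'a \<Rightarrow> bool) \<Rightarrow> bool" where
  "no_isolated V E \<longleftrightarrow> (\<forall>v\<in>V. \<exists>u\<in>V. E v u)"

definition open_twin_free :: "'a set \<Rightarrow> ('a \<Rightarrow> 'a \<Rightarrow> bool) \<Rightarrow> bool" where
  "open_twin_free V E \<longleftrightarrow> (\<forall>u\<in>V. \<forall>v\<in>V. u \<noteq> v \<longrightarrow> nbhd V E u \<noteq> nbhd V E v)"

definition dominating_vertex :: "'a set \<Rightarrow> ('a \<Rightarrow> 'a \<Rightarrow> bool) \<Rightarrow> 'a \<Rightarrow> bool" where
  "dominating_vertex V E v \<longleftrightarrow> v \<in> V \<and> (\<forall>u\<in>V. u \<noteq> v \<longrightarrow> E v u)"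

text \<open>Value of the total domination game from a position where D is the set of
already totally dominated vertices; the Boolean says whether it is Dominator's turn. The first argument is fuel:
every move totally dominates a new vertex of V, so fuel card V suffices.\<close>

fun tg_val :: "nat \<Rightarrow> 'a set \<Rightarrow> ('a \<Rightarrow> 'a \<Rightarrow> bool) \<Rightarrow> bool \<Rightarrow> 'a set \<Rightarrow> nat" where
  "tg_val 0 V E t D = 0"
| "tg_val (Suc k) V E t D =
     (let M = {x \<in> V. \<not> nbhd V E x \<subseteq> D} in
      if M = {} then 0
      else if t then Min ((\<lambda>x. Suc (tg_val k V E False (D \<union> nbhd V E x))) ` M)
      else Max ((\<lambda>x. Suc (tg_val k V E True (D \<union> nbhd V E x))) ` M))"

definition gamma_tg :: "'a set \<Rightarrow> ('a \<Rightarrow> 'a \<Rightarrow> bool) \<Rightarrow> nat" where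
  "gamma_tg V E = tg_val (card V) V E True {}"

text \<open>gamma_tg(G|v): Dominator-start game with v declared already totally dominated.\<close>
definition gamma_tg_pre :: "'a set \<Rightarrow> ('a \<Rightarrow> 'a \<Rightarrow> bool) \<Rightarrow> 'a \<Rightarrow> nat" where
  "gamma_tg_pre V E v = tg_val (card V) V E True {v}"

definition tg_critical3 :: "'a set \<Rightarrow> ('a \<Rightarrow> 'a \<Rightarrow> bool) \<Rightarrow> bool" where
  "tg_critical3 V E \<longleftrightarrow> gamma_tg V E = 3 \<and> (\<forall>v\<in>V. gamma_tg_pre V E v < 3)"

end

theory Submission imports Defs begin

lemma nb_mem: "u \<in> nbhd V E x \<longleftrightarrow> u \<in> V \<and> E x u" by (simp add: nbhd_def)
lemma nb_sub: "nbhd V E x \<subseteq> V" by (auto simp: nbhd_def)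

lemma tv_zero: "\<forall>x\<in>V. nbhd V E x \<subseteq> D \<Longrightarrow> tg_val k V E t D = 0"
  by (cases k) (auto simp: Let_def)

lemma tv_dom_le:
  assumes "finite V" "x \<in> V" "\<not> nbhd V E x \<subseteq> D"
  shows "tg_val (Suc k) V E True D \<le> Suc (tg_val k V E False (D \<union> nbhd V E x))"
proof -
  let ?M = "{x \<in> V. \<not> nbhd V E x \<subseteq> D}"
  have "x \<in> ?M" using assms by auto
  moreover have "finite ?M" using assms by auto
  ultimately show ?thesis
    by (auto simp: Let_def intro!: Min_le)
qed

lemma tv_stal_ge:
  assumes "finite V" "x \<in> V" "\<not> nbhd V E x \<subseteq> D"
  shows "Suc (tg_val k V E True (D \<union> nbhd V E x)) \<le> tg_val (Suc k) V E False D"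
proof -
  let ?M = "{x \<in> V. \<not> nbhd V E x \<subseteq> D}"
  have "x \<in> ?M" using assms by auto
  moreover have "finite ?M" using assms by auto
  ultimately show ?thesis
    by (auto simp: Let_def intro!: Max_ge)
qed

lemma tv_dom_ge:
  assumes "finite V" "x0 \<in> V" "\<not> nbhd V E x0 \<subseteq> D"
    and "\<And>x. x \<in> V \<Longrightarrow> \<not> nbhd V E x \<subseteq> D \<Longrightarrow> c \<le> Suc (tg_val k V E False (D \<union> nbhd V E x))"
  shows "c \<le> tg_val (Suc k) V E True D"
proof -
  let ?M = "{x \<in> V. \<not> nbhd V E x \<subseteq> D}"
  have "x0 \<in> ?M" using assms by auto
  moreover have "finite ?M" using assms by auto
  ultimately show ?thesis using assms(4)
    by (auto simp: Let_def Min_ge_iff)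
qed

lemma tv_stal_le:
  assumes "finite V"
    and "\<And>x. x \<in> V \<Longrightarrow> \<not> nbhd V E x \<subseteq> D \<Longrightarrow> Suc (tg_val k V E True (D \<union> nbhd V E x)) \<le> c"
  shows "tg_val (Suc k) V E False D \<le> c"
proof -
  let ?M = "{x \<in> V. \<not> nbhd V E x \<subseteq> D}"
  have "finite ?M" using assms by auto
  then show ?thesis using assms(2)
    by (auto simp: Let_def Max_le_iff)
qed

lemma tv_pos:
  assumes "finite V" "a \<in> V" "a \<notin> D" "z \<in> V" "E z a"
  shows "1 \<le> tg_val (Suc k) V E t D"
proof -
  have l: "\<not> nbhd V E z \<subseteq> D" using assms by (auto simp: nbhd_def)
  show ?thesis
  proof (cases t)
    case True
    then show ?thesis using tv_dom_ge[OF assms(1,4) l, of 1 k] by simp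
  next
    case False
    then show ?thesis using tv_stal_ge[OF assms(1,4) l, of k] by simp
  qed
qed

lemma tv_le: "finite V \<Longrightarrow> tg_val k V E t D \<le> k"
proof (induction k arbitrary: t D)
  case 0 then show ?case by simp
next
  case (Suc k)
  let ?M = "{x \<in> V. \<not> nbhd V E x \<subseteq> D}"
  show ?case
  proof (cases "?M = {}")
    case True then show ?thesis by (simp add: Let_def)
  next
    case False
    then obtain x where x: "x \<in> ?M" by blast
    show ?thesis
    proof (cases t)
      case True
      have "finite ?M \<or> True" by simp
      show ?thesis
      proof (cases "finite ?M")
        case True
        have "Min ((\<lambda>x. Suc (tg_val k V E False (D \<union> nbhd V E x))) ` ?M) \<le> Suc (tg_val k V E False (D \<union> nbhd V E x))"
          using True x by (intro Min_le) auto
        also have "\<dots> \<le> Suc k" using Suc.IH Suc.prems by simp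
        finally show ?thesis using \<open>t\<close> False by (simp add: Let_def)
      next
        case False
        then show ?thesis using Suc.prems by simp
      qed
    next
      case False
      show ?thesis
      proof (cases "finite ?M")
        case True
        have "Max ((\<lambda>x. Suc (tg_val k V E True (D \<union> nbhd V E x))) ` ?M) \<le> Suc k"
          using True x Suc.IH Suc.prems by (subst Max_le_iff) auto
        then show ?thesis using \<open>\<not> t\<close> \<open>?M \<noteq> {}\<close> by (simp add: Let_def)
      next
        case False
        then show ?thesis using Suc.prems by simp
      qed
    qed
  qed
qed

lemma tv_twin:
  assumes "u \<in> V" "v \<in> V" "u \<noteq> v" "nbhd V E u = nbhd V E v" "\<forall>a b. E a b \<longrightarrow> E b a"
  shows "(u \<in> D \<longleftrightarrow> v \<in> D) \<Longrightarrow> tg_val k V E t (insert v D) = tg_val k V E t D"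
proof (induction k arbitrary: t D)
  case 0 then show ?case by simp
next
  case (Suc k)
  have key: "v \<in> nbhd V E x \<longleftrightarrow> u \<in> nbhd V E x" if "x \<in> V" for x
  proof -
    have "v \<in> nbhd V E x \<longleftrightarrow> x \<in> nbhd V E v" using assms that by (auto simp: nbhd_def)
    also have "\<dots> \<longleftrightarrow> x \<in> nbhd V E u" using assms by simp
    also have "\<dots> \<longleftrightarrow> u \<in> nbhd V E x" using assms that by (auto simp: nbhd_def)
    finally show ?thesis .
  qed
  have M: "{x \<in> V. \<not> nbhd V E x \<subseteq> insert v D} = {x \<in> V. \<not> nbhd V E x \<subseteq> D}"
  proof (rule set_eqI, rule iffI)
    fix x assume "x \<in> {x \<in> V. \<not> nbhd V E x \<subseteq> insert v D}"
    then show "x \<in> {x \<in> V. \<not> nbhd V E x \<subseteq> D}" by auto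
  next
    fix x assume x: "x \<in> {x \<in> V. \<not> nbhd V E x \<subseteq> D}"
    show "x \<in> {x \<in> V. \<not> nbhd V E x \<subseteq> insert v D}"
    proof (rule ccontr)
      assume "x \<notin> {x \<in> V. \<not> nbhd V E x \<subseteq> insert v D}"
      then have s: "nbhd V E x \<subseteq> insert v D" using x by auto
      then have "v \<in> nbhd V E x" "v \<notin> D" using x by auto
      then have "u \<in> nbhd V E x" "u \<notin> D" using key x Suc.prems by auto
      then show False using s assms(3) by auto
    qed
  qed
  have IH: "tg_val k V E t' (insert v D \<union> nbhd V E x) = tg_val k V E t' (D \<union> nbhd V E x)"
    if "x \<in> V" for x t'
  proof -
    have "insert v D \<union> nbhd V E x = insert v (D \<union> nbhd V E x)" by auto
    moreover have "u \<in> D \<union> nbhd V E x \<longleftrightarrow> v \<in> D \<union> nbhd V E x" using key[OF that] Suc.prems by auto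
    ultimately show ?thesis using Suc.IH by simp
  qed
  have I1: "(\<lambda>x. Suc (tg_val k V E t' (insert v D \<union> nbhd V E x))) ` {x \<in> V. \<not> nbhd V E x \<subseteq> D}
     = (\<lambda>x. Suc (tg_val k V E t' (D \<union> nbhd V E x))) ` {x \<in> V. \<not> nbhd V E x \<subseteq> D}" for t'
    by (rule image_cong) (auto simp del: Un_insert_left simp: IH)
  show ?case
    by (simp only: tg_val.simps Let_def M I1)
qed


declare tg_val.simps(2)[simp del]

lemma sg_fin: "simple_graph V E \<Longrightarrow> finite V" by (simp add: simple_graph_def)
lemma sg_sym: "simple_graph V E \<Longrightarrow> E a b \<Longrightarrow> E b a" by (simp add: simple_graph_def)
lemma sg_irr: "simple_graph V E \<Longrightarrow> \<not> E a a" by (simp add: simple_graph_def)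

lemma has_nb:
  assumes "simple_graph V E" "no_isolated V E" "v \<in> V"
  shows "\<exists>z\<in>V. E z v \<and> z \<noteq> v"
  using assms by (metis no_isolated_def sg_irr sg_sym)

lemma deg_le:
  assumes "simple_graph V E" "v \<in> V" "\<not> dominating_vertex V E v"
  shows "deg V E v + 2 \<le> card V"
proof -
  obtain w where w: "w \<in> V" "w \<noteq> v" "\<not> E v w" using assms(2,3) by (auto simp: dominating_vertex_def)
  have "nbhd V E v \<subseteq> V - {v, w}" using w assms sg_irr[OF assms(1)] by (auto simp: nbhd_def)
  then have "card (nbhd V E v) \<le> card (V - {v, w})"
    using sg_fin[OF assms(1)] by (intro card_mono) auto
  also have "card (V - {v, w}) = card V - 2" using w assms(2) sg_fin[OF assms(1)]
    by (subst card_Diff_subset) auto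
  finally have "card (nbhd V E v) \<le> card V - 2" .
  moreover have "card {v, w} \<le> card V" using w assms(2) sg_fin[OF assms(1)] by (intro card_mono) auto
  ultimately show ?thesis unfolding deg_def using w by simp
qed


lemma card_ge3:
  assumes "simple_graph V E" "no_isolated V E" "\<not> (\<exists>v\<in>V. dominating_vertex V E v)"
  shows "3 \<le> card V"
proof -
  obtain x where x: "x \<in> V" using assms(1) by (auto simp: simple_graph_def)
  obtain z where z: "z \<in> V" "E z x" "z \<noteq> x" using has_nb[OF assms(1,2) x] by blast
  have "\<not> dominating_vertex V E x" using assms(3) x by blast
  then obtain w where w: "w \<in> V" "w \<noteq> x" "\<not> E x w" using x by (auto simp: dominating_vertex_def)
  have "w \<noteq> z" using w z sg_sym[OF assms(1)] by blast
  have "card {x, z, w} \<le> card V" using x z w sg_fin[OF assms(1)] by (intro card_mono) auto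
  then show ?thesis using \<open>w \<noteq> z\<close> w z by simp
qed

lemma gamma_le2_dom:
  assumes sg: "simple_graph V E" and ni: "no_isolated V E" and d: "dominating_vertex V E x"
  shows "gamma_tg V E \<le> 2"
proof -
  have fin: "finite V" using sg_fin[OF sg] .
  have x: "x \<in> V" using d by (simp add: dominating_vertex_def)
  obtain k where k: "card V = Suc k" using x fin by (metis card_gt_0_iff emptyE gr0_implies_Suc)
  obtain z where z: "z \<in> V" "E z x" "z \<noteq> x" using has_nb[OF sg ni x] by blast
  have lx: "\<not> nbhd V E x \<subseteq> {}" using z sg_sym[OF sg] by (auto simp: nbhd_def)
  have "gamma_tg V E \<le> Suc (tg_val k V E False ({} \<union> nbhd V E x))"
    unfolding gamma_tg_def k using tv_dom_le[OF fin x lx] .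
  moreover have "tg_val k V E False ({} \<union> nbhd V E x) \<le> 1"
  proof (cases k)
    case 0 then show ?thesis by simp
  next
    case (Suc k')
    have "tg_val (Suc k') V E False ({} \<union> nbhd V E x) \<le> 1"
    proof (rule tv_stal_le[OF fin])
      fix y assume y: "y \<in> V" "\<not> nbhd V E y \<subseteq> {} \<union> nbhd V E x"
      then obtain a where a: "a \<in> nbhd V E y" "a \<notin> nbhd V E x" by blast
      have "a = x" using a d by (auto simp: nbhd_def dominating_vertex_def)
      have "V \<subseteq> {} \<union> nbhd V E x \<union> nbhd V E y"
        using a \<open>a = x\<close> d by (auto simp: nbhd_def dominating_vertex_def)
      then have "tg_val k' V E True ({} \<union> nbhd V E x \<union> nbhd V E y) = 0"
        by (intro tv_zero) (auto simp: nbhd_def)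
      then show "Suc (tg_val k' V E True ({} \<union> nbhd V E x \<union> nbhd V E y)) \<le> 1" by simp
    qed
    then show ?thesis using Suc by simp
  qed
  ultimately show ?thesis by simp
qed

lemma twin_pre:
  assumes sg: "simple_graph V E" and "u \<in> V" "v \<in> V" "u \<noteq> v" "nbhd V E u = nbhd V E v"
  shows "gamma_tg_pre V E v = gamma_tg V E"
  unfolding gamma_tg_pre_def gamma_tg_def
  using tv_twin[OF assms(2-5), of "{}"] sg by (simp add: simple_graph_def)


lemma ar0: "(m::nat) = a + b \<Longrightarrow> b \<le> 1 \<Longrightarrow> a + 2 \<le> m \<Longrightarrow> P" by linarith
lemma ar1: "(m::nat) = a + b \<Longrightarrow> b \<le> 1 \<Longrightarrow> c + 2 \<le> m \<Longrightarrow> a \<le> Suc c \<Longrightarrow> c + 2 = m" by linarith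

lemma crit_c:
  assumes sg: "simple_graph V E" and ni: "no_isolated V E" and otf: "open_twin_free V E"
    and nd: "\<not> (\<exists>v\<in>V. dominating_vertex V E v)" and v: "v \<in> V"
    and pre: "gamma_tg_pre V E v \<le> 2"
  shows "\<exists>u\<in>V. deg V E u + 2 = card V \<and> \<not> E u v"
proof -
  have fin: "finite V" using sg_fin[OF sg] .
  have "3 \<le> card V" using card_ge3[OF sg ni nd] .
  then obtain k where k: "card V = Suc (Suc (Suc k))"
    using le_iff_add[of 3 "card V"] by auto
  obtain w where w: "w \<in> V" "E w v" "w \<noteq> v" using has_nb[OF sg ni v] by blast
  have lv: "\<not> nbhd V E v \<subseteq> {v}" using w sg_sym[OF sg] by (auto simp: nbhd_def)
  obtain x where x: "x \<in> V" "\<not> nbhd V E x \<subseteq> {v}"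
    and xv: "tg_val (Suc (Suc k)) V E False ({v} \<union> nbhd V E x) \<le> 1"
  proof (rule ccontr)
    note th = that
    assume nt: "\<not> thesis"
    have "3 \<le> Suc (tg_val (Suc (Suc k)) V E False ({v} \<union> nbhd V E x))"
      if xx: "x \<in> V" "\<not> nbhd V E x \<subseteq> {v}" for x
    proof (rule ccontr)
      assume "\<not> 3 \<le> Suc (tg_val (Suc (Suc k)) V E False ({v} \<union> nbhd V E x))"
      then have "tg_val (Suc (Suc k)) V E False ({v} \<union> nbhd V E x) \<le> 1" by simp
      from th[OF xx this] nt show False by blast
    qed
    then have "3 \<le> tg_val (Suc (Suc (Suc k))) V E True {v}"
      by (rule tv_dom_ge[OF fin v lv])
    then show False using pre unfolding gamma_tg_pre_def k by simp
  qed
  define D where "D = {v} \<union> nbhd V E x"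
  have DV: "D \<subseteq> V" using v by (auto simp: D_def nbhd_def)
  have cover: "V \<subseteq> D \<union> nbhd V E y" if "y \<in> V" "\<not> nbhd V E y \<subseteq> D" for y
  proof (rule ccontr)
    assume "\<not> V \<subseteq> D \<union> nbhd V E y"
    then obtain a where a: "a \<in> V" "a \<notin> D \<union> nbhd V E y" by blast
    obtain z where z: "z \<in> V" "E z a" using has_nb[OF sg ni a(1)] by blast
    have "1 \<le> tg_val (Suc k) V E True (D \<union> nbhd V E y)" by (rule tv_pos[where E=E, OF fin a z])
    moreover have "Suc (tg_val (Suc k) V E True (D \<union> nbhd V E y)) \<le> tg_val (Suc (Suc k)) V E False D"
      by (rule tv_stal_ge[OF fin that])
    ultimately show False using xv unfolding D_def by simp
  qed
  have sub: "nbhd V E a \<subseteq> nbhd V E b" if "a \<in> V - D" "b \<in> V - D" for a b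
  proof
    fix z assume "z \<in> nbhd V E a"
    then have z: "z \<in> V" "E z a" using sg_sym[OF sg] by (auto simp: nbhd_def)
    have "\<not> nbhd V E z \<subseteq> D" using z that by (auto simp: nbhd_def)
    then have "b \<in> nbhd V E z" using cover[OF z(1)] that by auto
    then show "z \<in> nbhd V E b" using z sg_sym[OF sg] by (auto simp: nbhd_def)
  qed
  have W1: "card (V - D) \<le> 1"
  proof -
    have "\<forall>a\<in>V - D. \<forall>b\<in>V - D. a = b"
    proof (intro ballI)
      fix a b assume ab: "a \<in> V - D" "b \<in> V - D"
      have "nbhd V E a = nbhd V E b" using sub[OF ab] sub[OF ab(2,1)] by blast
      then show "a = b" using otf ab unfolding open_twin_free_def by blast
    qed
    then show ?thesis using fin by (simp add: card_le_Suc0_iff_eq)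
  qed
  have cV: "card V = card D + card (V - D)"
  proof -
    have "finite D" using DV fin finite_subset by blast
    then have "card (V - D) = card V - card D" using DV by (rule card_Diff_subset)
    moreover have "card D \<le> card V" using DV fin by (simp add: card_mono)
    ultimately show ?thesis by simp
  qed
  have ndx: "\<not> dominating_vertex V E x" using nd x by blast
  have dx: "card (nbhd V E x) + 2 \<le> card V" using deg_le[OF sg x(1) ndx] by (simp only: deg_def)
  show ?thesis
  proof (cases "E x v")
    case True
    then have "D = nbhd V E x" using v by (auto simp: D_def nbhd_def)
    then have "card V = card (nbhd V E x) + card (V - D)" using cV by (simp only:)
    then show ?thesis using W1 dx by (rule ar0)
  next
    case False
    have fn: "finite (nbhd V E x)" using finite_subset[OF nb_sub fin] .
    have cD: "card D \<le> Suc (card (nbhd V E x))" unfolding D_def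
      using card_insert_if[OF fn, of v] by simp
    have "card (nbhd V E x) + 2 = card V" using cV W1 dx cD by (rule ar1)
    then have "deg V E x + 2 = card V" by (simp only: deg_def)
    then show ?thesis using x(1) False by blast
  qed
qed


lemma gamma_ge3:
  assumes sg: "simple_graph V E" and ni: "no_isolated V E" and otf: "open_twin_free V E"
    and nd: "\<not> (\<exists>v\<in>V. dominating_vertex V E v)"
  shows "3 \<le> gamma_tg V E"
proof -
  have fin: "finite V" using sg_fin[OF sg] .
  have "3 \<le> card V" using card_ge3[OF sg ni nd] .
  then obtain k where k: "card V = Suc (Suc (Suc k))"
    using le_iff_add[of 3 "card V"] by auto
  obtain x0 where x0: "x0 \<in> V" using sg by (auto simp: simple_graph_def)
  obtain z0 where z0: "z0 \<in> V" "E z0 x0" "z0 \<noteq> x0" using has_nb[OF sg ni x0] by blast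
  have l0: "\<not> nbhd V E z0 \<subseteq> {}" using z0 x0 by (auto simp: nbhd_def)
  have "3 \<le> tg_val (Suc (Suc (Suc k))) V E True {}"
  proof (rule tv_dom_ge[OF fin z0(1) l0])
    fix x assume x: "x \<in> V" "\<not> nbhd V E x \<subseteq> {}"
    let ?U = "V - nbhd V E x"
    have xU: "x \<in> ?U" using x sg_irr[OF sg] by (auto simp: nbhd_def)
    have "\<not> dominating_vertex V E x" using nd x by blast
    then obtain w where w: "w \<in> V" "w \<noteq> x" "\<not> E x w" using x by (auto simp: dominating_vertex_def)
    have wU: "w \<in> ?U" using w by (auto simp: nbhd_def)
    have "\<exists>y\<in>V. \<exists>a\<in>?U. \<exists>b\<in>?U. a \<in> nbhd V E y \<and> b \<notin> nbhd V E y"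
    proof (rule ccontr)
      assume "\<not> ?thesis"
      then have H: "\<And>y a b. y \<in> V \<Longrightarrow> a \<in> ?U \<Longrightarrow> b \<in> ?U \<Longrightarrow> a \<in> nbhd V E y \<Longrightarrow> b \<in> nbhd V E y"
        by blast
      have S: "nbhd V E a \<subseteq> nbhd V E b" if "a \<in> ?U" "b \<in> ?U" for a b
      proof
        fix z assume "z \<in> nbhd V E a"
        then have z: "z \<in> V" "a \<in> nbhd V E z" using sg_sym[OF sg] that by (auto simp: nbhd_def)
        then have "b \<in> nbhd V E z" using H that by blast
        then show "z \<in> nbhd V E b" using z sg_sym[OF sg] by (auto simp: nbhd_def)
      qed
      have "nbhd V E x = nbhd V E w" using S[OF xU wU] S[OF wU xU] by blast
      then show False using otf x(1) w(1,2) unfolding open_twin_free_def by blast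
    qed
    then obtain y a b where y: "y \<in> V" "a \<in> ?U" "b \<in> ?U" "a \<in> nbhd V E y" "b \<notin> nbhd V E y"
      by blast
    have ly: "\<not> nbhd V E y \<subseteq> {} \<union> nbhd V E x" using y by blast
    have bV: "b \<in> V" "b \<notin> {} \<union> nbhd V E x \<union> nbhd V E y" using y by auto
    obtain zb where zb: "zb \<in> V" "E zb b" using has_nb[OF sg ni bV(1)] by blast
    have "1 \<le> tg_val (Suc k) V E True ({} \<union> nbhd V E x \<union> nbhd V E y)"
      by (rule tv_pos[where E=E, OF fin bV zb])
    moreover have "Suc (tg_val (Suc k) V E True ({} \<union> nbhd V E x \<union> nbhd V E y))
        \<le> tg_val (Suc (Suc k)) V E False ({} \<union> nbhd V E x)"
      by (rule tv_stal_ge[OF fin y(1) ly])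
    ultimately show "3 \<le> Suc (tg_val (Suc (Suc k)) V E False ({} \<union> nbhd V E x))" by linarith
  qed
  then show ?thesis unfolding gamma_tg_def k .
qed


lemma card_rest1:
  assumes fin: "finite V" and DV: "D \<subseteq> V" and c: "card V \<le> card D + 1"
  shows "card (V - D) \<le> 1"
proof -
  have "finite D" using DV fin finite_subset by blast
  then have "card (V - D) = card V - card D" using DV by (rule card_Diff_subset)
  then show ?thesis using c by linarith
qed

lemma one_elem:
  assumes "finite A" "card A \<le> 1" "a \<in> A" "b \<in> A" shows "a = b"
  using assms by (metis card_le_Suc0_iff_eq One_nat_def)

lemma exists_deg2:
  assumes sg: "simple_graph V E" and nd: "\<not> (\<exists>v\<in>V. dominating_vertex V E v)"
    and c: "\<forall>v\<in>V. deg V E v + 3 \<le> card V \<longrightarrow> (\<exists>u\<in>V. deg V E u + 2 = card V \<and> \<not> E u v)"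
  shows "\<exists>x\<in>V. deg V E x + 2 = card V"
proof -
  obtain v where v: "v \<in> V" using sg by (auto simp: simple_graph_def)
  show ?thesis
  proof (cases "deg V E v + 3 \<le> card V")
    case True then show ?thesis using c v by blast
  next
    case False
    have "deg V E v + 2 \<le> card V" using deg_le[OF sg v] nd v by blast
    then have "deg V E v + 2 = card V" using False by linarith
    then show ?thesis using v by blast
  qed
qed

lemma gamma_le3:
  assumes sg: "simple_graph V E" and ni: "no_isolated V E"
    and nd: "\<not> (\<exists>v\<in>V. dominating_vertex V E v)"
    and c: "\<forall>v\<in>V. deg V E v + 3 \<le> card V \<longrightarrow> (\<exists>u\<in>V. deg V E u + 2 = card V \<and> \<not> E u v)"
  shows "gamma_tg V E \<le> 3"
proof -
  have fin: "finite V" using sg_fin[OF sg] .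
  obtain x where x: "x \<in> V" "deg V E x + 2 = card V" using exists_deg2[OF sg nd c] by blast
  obtain k where k: "card V = Suc k" using x fin by (metis card_gt_0_iff emptyE gr0_implies_Suc)
  obtain z where z: "z \<in> V" "E z x" "z \<noteq> x" using has_nb[OF sg ni x(1)] by blast
  have lx: "\<not> nbhd V E x \<subseteq> {}" using z sg_sym[OF sg] by (auto simp: nbhd_def)
  have fn: "finite (nbhd V E x)" using finite_subset[OF nb_sub fin] .
  have cU: "card (V - nbhd V E x) = 2"
  proof -
    have "card (V - nbhd V E x) = card V - card (nbhd V E x)" by (rule card_Diff_subset[OF fn nb_sub])
    then show ?thesis using x(2) unfolding deg_def by linarith
  qed
  have "gamma_tg V E \<le> Suc (tg_val k V E False ({} \<union> nbhd V E x))"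
    unfolding gamma_tg_def k using tv_dom_le[OF fin x(1) lx] .
  moreover have "tg_val k V E False ({} \<union> nbhd V E x) \<le> 2"
  proof (cases k)
    case 0 then show ?thesis by simp
  next
    case (Suc k')
    have "tg_val (Suc k') V E False ({} \<union> nbhd V E x) \<le> 2"
    proof (rule tv_stal_le[OF fin])
      fix y assume y: "y \<in> V" "\<not> nbhd V E y \<subseteq> {} \<union> nbhd V E x"
      define D where "D = {} \<union> nbhd V E x \<union> nbhd V E y"
      then obtain a where a: "a \<in> nbhd V E y" "a \<notin> nbhd V E x" using y by blast
      have aV: "a \<in> V" using a by (simp add: nbhd_def)
      have ps: "V - D \<subset> V - nbhd V E x" using a aV by (auto simp: D_def)
      have "card (V - D) < card (V - nbhd V E x)" by (rule psubset_card_mono[OF _ ps]) (use fin in simp)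
      then have R1: "card (V - D) \<le> 1" using cU by linarith
      have "tg_val k' V E True D \<le> 1"
      proof (cases "V - D = {}")
        case True
        then show ?thesis by (subst tv_zero) (auto simp: D_def nbhd_def)
      next
        case False
        then obtain c0 where c0: "c0 \<in> V" "c0 \<notin> D" by blast
        obtain zc where zc: "zc \<in> V" "E zc c0" using has_nb[OF sg ni c0(1)] by blast
        have lz: "\<not> nbhd V E zc \<subseteq> D" using zc c0 by (auto simp: nbhd_def)
        have cov: "V \<subseteq> D \<union> nbhd V E zc"
        proof
          fix q assume q: "q \<in> V"
          show "q \<in> D \<union> nbhd V E zc"
          proof (cases "q \<in> D")
            case False
            then have "q = c0" using one_elem[of "V - D" q c0] R1 fin q c0 by auto
            then show ?thesis using zc c0 by (auto simp: nbhd_def)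
          qed simp
        qed
        show ?thesis
        proof (cases k')
          case 0 then show ?thesis by simp
        next
          case (Suc k'')
          have "tg_val (Suc k'') V E True D \<le> Suc (tg_val k'' V E False (D \<union> nbhd V E zc))"
            by (rule tv_dom_le[OF fin zc(1) lz])
          moreover have "tg_val k'' V E False (D \<union> nbhd V E zc) = 0"
            using cov by (intro tv_zero) (auto simp: nbhd_def)
          ultimately show ?thesis using Suc by simp
        qed
      qed
      then show "Suc (tg_val k' V E True ({} \<union> nbhd V E x \<union> nbhd V E y)) \<le> 2"
        unfolding D_def by simp
    qed
    then show ?thesis using Suc by simp
  qed
  ultimately show ?thesis by simp
qed


lemma pre_le2:
  assumes sg: "simple_graph V E" and ni: "no_isolated V E"
    and nd: "\<not> (\<exists>v\<in>V. dominating_vertex V E v)"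
    and c: "\<forall>v\<in>V. deg V E v + 3 \<le> card V \<longrightarrow> (\<exists>u\<in>V. deg V E u + 2 = card V \<and> \<not> E u v)"
    and v: "v \<in> V"
  shows "gamma_tg_pre V E v \<le> 2"
proof -
  have fin: "finite V" using sg_fin[OF sg] .
  have "\<exists>x\<in>V. \<not> nbhd V E x \<subseteq> {v} \<and> card (V - ({v} \<union> nbhd V E x)) \<le> 1"
  proof (cases "deg V E v + 3 \<le> card V")
    case True
    then obtain u where u: "u \<in> V" "deg V E u + 2 = card V" "\<not> E u v" using c v by blast
    have uv: "u \<noteq> v" using u(2) True by auto
    have s: "nbhd V E u \<subseteq> V - {u, v}" using u sg_irr[OF sg] by (auto simp: nbhd_def)
    have c2: "card (V - {u, v}) = card V - 2" using u(1) v uv fin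
      by (subst card_Diff_subset) auto
    have cu: "card (nbhd V E u) = card (V - {u, v})" using c2 u(2) unfolding deg_def by linarith
    have "nbhd V E u = V - {u, v}"
      by (rule card_subset_eq[OF _ s cu]) (use fin in blast)
    then have "V - ({v} \<union> nbhd V E u) \<subseteq> {u}" by auto
    then have "card (V - ({v} \<union> nbhd V E u)) \<le> card {u}"
      by (rule card_mono[rotated]) simp
    then have c1: "card (V - ({v} \<union> nbhd V E u)) \<le> 1" by simp
    have "card (nbhd V E u) \<noteq> 0" using u(2) True unfolding deg_def by linarith
    then obtain q where "q \<in> nbhd V E u" by (metis card.empty ex_in_conv)
    then have "\<not> nbhd V E u \<subseteq> {v}" using u(3) by (auto simp: nbhd_def)
    then show ?thesis using u(1) c1 by blast
  next
    case False
    have "deg V E v + 2 \<le> card V" using deg_le[OF sg v] nd v by blast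
    then have dv: "deg V E v + 2 = card V" using False by linarith
    obtain w where w: "w \<in> V" "E w v" "w \<noteq> v" using has_nb[OF sg ni v] by blast
    have lv: "\<not> nbhd V E v \<subseteq> {v}" using w sg_sym[OF sg] by (auto simp: nbhd_def)
    have fn: "finite (nbhd V E v)" using finite_subset[OF nb_sub fin] .
    have vn: "v \<notin> nbhd V E v" using sg_irr[OF sg] by (auto simp: nbhd_def)
    have "card ({v} \<union> nbhd V E v) = Suc (card (nbhd V E v))" using fn vn by simp
    moreover have "{v} \<union> nbhd V E v \<subseteq> V" using v nb_sub[of V E v] by auto
    moreover have "card V \<le> card ({v} \<union> nbhd V E v) + 1" using dv calculation(1)
      unfolding deg_def by linarith
    ultimately have "card (V - ({v} \<union> nbhd V E v)) \<le> 1"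
      using card_rest1[OF fin] by blast
    then show ?thesis using v lv by blast
  qed
  then obtain x where x: "x \<in> V" "\<not> nbhd V E x \<subseteq> {v}" and R: "card (V - ({v} \<union> nbhd V E x)) \<le> 1"
    by blast
  obtain k where k: "card V = Suc k" using x fin by (metis card_gt_0_iff emptyE gr0_implies_Suc)
  have "gamma_tg_pre V E v \<le> Suc (tg_val k V E False ({v} \<union> nbhd V E x))"
    unfolding gamma_tg_pre_def k using tv_dom_le[OF fin x(1,2)] .
  moreover have "tg_val k V E False ({v} \<union> nbhd V E x) \<le> 1"
  proof (cases k)
    case 0 then show ?thesis by simp
  next
    case (Suc k')
    have "tg_val (Suc k') V E False ({v} \<union> nbhd V E x) \<le> 1"
    proof (rule tv_stal_le[OF fin])
      fix y assume y: "y \<in> V" "\<not> nbhd V E y \<subseteq> {v} \<union> nbhd V E x"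
      then obtain b where b: "b \<in> nbhd V E y" "b \<notin> {v} \<union> nbhd V E x" by blast
      have bV: "b \<in> V" using b by (simp add: nbhd_def)
      have cov: "V \<subseteq> {v} \<union> nbhd V E x \<union> nbhd V E y"
      proof
        fix q assume q: "q \<in> V"
        show "q \<in> {v} \<union> nbhd V E x \<union> nbhd V E y"
        proof (cases "q \<in> {v} \<union> nbhd V E x")
          case False
          then have "q = b" using one_elem[of "V - ({v} \<union> nbhd V E x)" q b] R fin q b bV by auto
          then show ?thesis using b by auto
        qed auto
      qed
      have "tg_val k' V E True ({v} \<union> nbhd V E x \<union> nbhd V E y) = 0"
        using cov by (intro tv_zero) (auto simp: nbhd_def)
      then show "Suc (tg_val k' V E True ({v} \<union> nbhd V E x \<union> nbhd V E y)) \<le> 1" by simp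
    qed
    then show ?thesis using Suc by simp
  qed
  ultimately show ?thesis by simp
qed

theorem theorem4p6:
  fixes V :: "'a set" and E :: "'a \<Rightarrow> 'a \<Rightarrow> bool" and n :: nat
  assumes "simple_graph V E" and "n = card V" and "no_isolated V E"
  shows "tg_critical3 V E \<longleftrightarrow>
           open_twin_free V E
         \<and> \<not> (\<exists>v\<in>V. dominating_vertex V E v)
         \<and> (\<forall>v\<in>V. deg V E v + 3 \<le> n \<longrightarrow>
               (\<exists>u\<in>V. deg V E u + 2 = n \<and> \<not> E u v))"
proof
  assume cr: "tg_critical3 V E"
  have g3: "gamma_tg V E = 3" and pr: "\<forall>v\<in>V. gamma_tg_pre V E v < 3"
    using cr by (auto simp: tg_critical3_def)
  have otf: "open_twin_free V E"
    unfolding open_twin_free_def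
  proof (intro ballI impI)
    fix u v assume uv: "u \<in> V" "v \<in> V" "u \<noteq> v"
    show "nbhd V E u \<noteq> nbhd V E v"
    proof
      assume "nbhd V E u = nbhd V E v"
      then have "gamma_tg_pre V E v = gamma_tg V E" by (rule twin_pre[OF assms(1) uv])
      then show False using g3 pr uv(2) by auto
    qed
  qed
  have nd: "\<not> (\<exists>v\<in>V. dominating_vertex V E v)"
  proof
    assume "\<exists>v\<in>V. dominating_vertex V E v"
    then obtain x where "dominating_vertex V E x" by blast
    from gamma_le2_dom[OF assms(1,3) this] g3 show False by simp
  qed
  have "\<forall>v\<in>V. deg V E v + 3 \<le> n \<longrightarrow> (\<exists>u\<in>V. deg V E u + 2 = n \<and> \<not> E u v)"
  proof (intro ballI impI)
    fix v assume v: "v \<in> V"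
    have "gamma_tg_pre V E v \<le> 2" using pr v by fastforce
    then show "\<exists>u\<in>V. deg V E u + 2 = n \<and> \<not> E u v"
      using crit_c[OF assms(1,3) otf nd v] assms(2) by simp
  qed
  then show "open_twin_free V E \<and> \<not> (\<exists>v\<in>V. dominating_vertex V E v)
         \<and> (\<forall>v\<in>V. deg V E v + 3 \<le> n \<longrightarrow> (\<exists>u\<in>V. deg V E u + 2 = n \<and> \<not> E u v))"
    using otf nd by blast
next
  assume h: "open_twin_free V E \<and> \<not> (\<exists>v\<in>V. dominating_vertex V E v)
         \<and> (\<forall>v\<in>V. deg V E v + 3 \<le> n \<longrightarrow> (\<exists>u\<in>V. deg V E u + 2 = n \<and> \<not> E u v))"
  then have otf: "open_twin_free V E" and nd: "\<not> (\<exists>v\<in>V. dominating_vertex V E v)"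
    and c: "\<forall>v\<in>V. deg V E v + 3 \<le> card V \<longrightarrow> (\<exists>u\<in>V. deg V E u + 2 = card V \<and> \<not> E u v)"
    using assms(2) by auto
  have "gamma_tg V E = 3"
    using gamma_ge3[OF assms(1,3) otf nd] gamma_le3[OF assms(1,3) nd c] by simp
  moreover have "\<forall>v\<in>V. gamma_tg_pre V E v < 3"
  proof
    fix v assume "v \<in> V"
    then have "gamma_tg_pre V E v \<le> 2" by (rule pre_le2[OF assms(1,3) nd c])
    then show "gamma_tg_pre V E v < 3" by simp
  qed
  ultimately show "tg_critical3 V E" by (simp add: tg_critical3_def)
qed

end
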